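(* Let $M$ be a three-dimensional warped product space and let $\vec r:\mathbb{S}^2\to M$ be an embedding as a strictly convex closed surface with unit normal $\nu$. Let $\varphi=X\cdot\nu$ be its support function, where $X=rf(r)\frac{\partial}{\partial r}$, and let $m_0=\{p\in\mathbb{S}^2:\vec r(p)=0\}$. Then $d\varphi\neq 0$ at every point of $$Z=\{p\in\mathbb{S}^2\setminus m_0:\varphi(p)=0\},$$ so $Z$ is a regular curve on the sphere.
   Context: A three-dimensional warped product space is (a region of) $\mathbb{R}^3$ with polar coordinates $(r,\theta)$ and metric $ds^2=\frac{1}{f(r)^2}dr^2+r^2dS_2^2$ ($dS_2^2$ round metric, $f$ smooth and positive), with inner product $\cdot$. $X=rf(r)\partial_r$ is the conformal Killing vector field of this space. Strictly convex means positive definite second fundamental form. *)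

theory Defs
  imports "HOL-Analysis.Analysis"
begin

text \<open>Points of the ambient region and of the parameter sphere are vectors in real^3.
  The standard sphere S^2 is sphere 0 1.\<close>

definition pd :: "3 \<Rightarrow> (real^3 \<Rightarrow> real) \<Rightarrow> real^3 \<Rightarrow> real" where
  "pd i g x = deriv (\<lambda>t. g (x + t *\<^sub>R axis i 1)) 0"

definition smooth_fun :: "(real^3) set \<Rightarrow> (real^3 \<Rightarrow> real) \<Rightarrow> bool" where
  "smooth_fun U g \<longleftrightarrow> open U \<and> (\<forall>is. \<forall>x\<in>U. foldr pd is g differentiable (at x))"

definition smooth_map :: "(real^3) set \<Rightarrow> (real^3 \<Rightarrow> real^3) \<Rightarrow> bool" where
  "smooth_map U F \<longleftrightarrow> (\<forall>k. smooth_fun U (\<lambda>x. F x $ k))"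

definition smooth1 :: "real set \<Rightarrow> (real \<Rightarrow> real) \<Rightarrow> bool" where
  "smooth1 U f \<longleftrightarrow> open U \<and> (\<forall>n. \<forall>t\<in>U. ((deriv ^^ n) f) differentiable (at t))"

text \<open>The warped product metric ds^2 = dr^2/f(r)^2 + r^2 dS_2^2 written in Cartesian
  coordinates: Euclidean metric plus (1/f^2 - 1) dr^2, where dr(v) = v.x/|x|.
  At the origin the value is the Euclidean inner product (forced by continuity).\<close>
definition gm :: "(real \<Rightarrow> real) \<Rightarrow> real^3 \<Rightarrow> real^3 \<Rightarrow> real^3 \<Rightarrow> real" where
  "gm f x v w = (if x = 0 then v \<bullet> w
      else v \<bullet> w + (1 / (f (norm x))\<^sup>2 - 1) * (v \<bullet> x) * (w \<bullet> x) / (norm x)\<^sup>2)"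

definition dgm :: "(real \<Rightarrow> real) \<Rightarrow> real^3 \<Rightarrow> real^3 \<Rightarrow> real^3 \<Rightarrow> real^3 \<Rightarrow> real" where
  "dgm f x a b w = deriv (\<lambda>t. gm f (x + t *\<^sub>R a) b w) 0"

text \<open>Christoffel symbols of the Levi-Civita connection (Koszul formula):
  Gamma(a,b) is the vector c with g(c,w) = 1/2 (a g(b,w) + b g(a,w) - w g(a,b)).\<close>
definition chr :: "(real \<Rightarrow> real) \<Rightarrow> real^3 \<Rightarrow> real^3 \<Rightarrow> real^3 \<Rightarrow> real^3" where
  "chr f x a b = (THE c. \<forall>w. gm f x c w =
      (dgm f x a b w + dgm f x b a w - dgm f x w a b) / 2)"

text \<open>The conformal Killing field X = r f(r) d/dr = f(|x|) x.\<close>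
definition ckf :: "(real \<Rightarrow> real) \<Rightarrow> real^3 \<Rightarrow> real^3" where
  "ckf f x = f (norm x) *\<^sub>R x"

text \<open>Second fundamental form of the surface R (restricted to the sphere) with unit
  normal N at p, on tangent vectors u v of the sphere at p:
  h(u,v) = - g(nabla_u N, dR v), nabla_u N = dN(u) + Gamma(dR u, N).\<close>
definition sff :: "(real \<Rightarrow> real) \<Rightarrow> (real^3 \<Rightarrow> real^3) \<Rightarrow> (real^3 \<Rightarrow> real^3)
                    \<Rightarrow> real^3 \<Rightarrow> real^3 \<Rightarrow> real^3 \<Rightarrow> real" where
  "sff f R N p u v = - gm f (R p)
      (frechet_derivative N (at p) u + chr f (R p) (frechet_derivative R (at p) u) (N p))
      (frechet_derivative R (at p) v)"

end

theory Submission
  imports Defs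
begin

definition Hf :: "(real \<Rightarrow> real) \<Rightarrow> real \<Rightarrow> real" where
  "Hf f s = (1 / (f (sqrt s))\<^sup>2 - 1) / s"

lemma gm_eq: "gm f y v w = v \<bullet> w + Hf f (y \<bullet> y) * (v \<bullet> y) * (w \<bullet> y)"
  by (cases "y = 0") (auto simp: gm_def Hf_def norm_eq_sqrt_inner power2_norm_eq_inner)

lemma smooth_map_diff:
  assumes "smooth_map U R" "p \<in> U" shows "R differentiable (at p)"
proof -
  have "\<forall>i\<in>Basis. (\<lambda>x. R x \<bullet> i) differentiable at p"
  proof
    fix i :: "real^3" assume "i \<in> Basis"
    then obtain k where k: "i = axis k 1" by (auto simp: Basis_vec_def)
    have "smooth_fun U (\<lambda>x. R x $ k)" using assms(1) by (simp add: smooth_map_def)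
    hence "(\<lambda>x. R x $ k) differentiable at p" using assms(2)
      unfolding smooth_fun_def by (metis foldr_Nil id_apply)
    thus "(\<lambda>x. R x \<bullet> i) differentiable at p" by (simp add: k inner_axis)
  qed
  thus ?thesis using differentiable_componentwise_within by blast
qed

lemma Hf_diff:
  assumes "f differentiable (at (sqrt s))" "s > 0" "f (sqrt s) \<noteq> 0"
  shows "Hf f differentiable (at s)"
proof -
  obtain d where d: "(f has_real_derivative d) (at (sqrt s))"
    using assms(1) real_differentiable_def by blast
  have sq: "(sqrt has_real_derivative (inverse (sqrt s) / 2)) (at s)"
    using DERIV_real_sqrt assms(2) by blast
  have g: "((\<lambda>s. f (sqrt s)) has_real_derivative d * (inverse (sqrt s) / 2)) (at s)"
    using DERIV_chain2[OF d sq] .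
  have "\<exists>D. ((\<lambda>s. (1 / (f (sqrt s))\<^sup>2 - 1) / s) has_real_derivative D) (at s)"
    apply (rule exI)
    apply (rule derivative_eq_intros g refl | use assms in simp)+
    done
  thus ?thesis unfolding Hf_def[abs_def] real_differentiable_def by blast
qed

lemma dgm_eq:
  assumes c1: "(Hf f has_real_derivative c1) (at (x \<bullet> x))"
  shows "dgm f x a b w = c1 * (2 * (a \<bullet> x)) * (b \<bullet> x) * (w \<bullet> x)
            + Hf f (x \<bullet> x) * ((b \<bullet> a) * (w \<bullet> x) + (b \<bullet> x) * (w \<bullet> a))"
proof -
  have e1: "(\<lambda>t. (x + t *\<^sub>R a) \<bullet> (x + t *\<^sub>R a)) = (\<lambda>t. x \<bullet> x + 2 * t * (a \<bullet> x) + t^2 * (a \<bullet> a))"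
    by (auto simp: inner_add inner_commute power2_eq_square algebra_simps)
  have q: "((\<lambda>t. (x + t *\<^sub>R a) \<bullet> (x + t *\<^sub>R a)) has_real_derivative 2 * (a \<bullet> x)) (at 0)"
    unfolding e1 by (rule derivative_eq_intros refl | simp)+
  have c1': "(Hf f has_real_derivative c1) (at ((x + 0 *\<^sub>R a) \<bullet> (x + 0 *\<^sub>R a)))"
    using c1 by simp
  have h: "((\<lambda>t. Hf f ((x + t *\<^sub>R a) \<bullet> (x + t *\<^sub>R a))) has_real_derivative c1 * (2 * (a \<bullet> x))) (at 0)"
    using DERIV_chain2[OF c1' q] .
  have eb: "\<And>v. (\<lambda>t. v \<bullet> (x + t *\<^sub>R a)) = (\<lambda>t. v \<bullet> x + t * (v \<bullet> a))"
    by (auto simp: inner_add)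
  have lb: "\<And>v. ((\<lambda>t. v \<bullet> (x + t *\<^sub>R a)) has_real_derivative (v \<bullet> a)) (at 0)"
    unfolding eb by (rule derivative_eq_intros refl | simp)+
  have "((\<lambda>t. gm f (x + t *\<^sub>R a) b w) has_real_derivative
          c1 * (2 * (a \<bullet> x)) * (b \<bullet> x) * (w \<bullet> x)
            + Hf f (x \<bullet> x) * ((b \<bullet> a) * (w \<bullet> x) + (b \<bullet> x) * (w \<bullet> a))) (at 0)"
    unfolding gm_eq
    apply (rule derivative_eq_intros h lb refl)+
    apply (simp add: algebra_simps)
    done
  thus ?thesis unfolding dgm_def by (rule DERIV_imp_deriv)
qed

lemma one_plus_Hf:
  assumes "x \<noteq> 0" "f (norm x) \<noteq> 0"
  shows "1 + Hf f (x \<bullet> x) * (x \<bullet> x) = 1 / (f (norm x))\<^sup>2"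
  using assms by (simp add: Hf_def norm_eq_sqrt_inner)

lemma chr_eq:
  assumes x: "x \<noteq> 0" and fx: "f (norm x) \<noteq> 0"
    and c1: "(Hf f has_real_derivative c1) (at (x \<bullet> x))"
  shows "chr f x a b = ((c1 * (a \<bullet> x) * (b \<bullet> x) + Hf f (x \<bullet> x) * (a \<bullet> b)) * (f (norm x))\<^sup>2) *\<^sub>R x"
proof -
  define h where "h = Hf f (x \<bullet> x)"
  define l where "l = c1 * (a \<bullet> x) * (b \<bullet> x) + h * (a \<bullet> b)"
  define F where "F = f (norm x)"
  have hh: "1 + h * (x \<bullet> x) = 1 / F\<^sup>2" unfolding h_def F_def using one_plus_Hf[of x f, OF x fx] .
  have F0: "F \<noteq> 0" using fx F_def by simp
  have K: "(dgm f x a b w + dgm f x b a w - dgm f x w a b) / 2 = l * (w \<bullet> x)" for w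
    unfolding dgm_eq[OF c1] l_def h_def by (simp add: inner_commute algebra_simps)
  define P where "P = (\<lambda>c. \<forall>w. gm f x c w = (dgm f x a b w + dgm f x b a w - dgm f x w a b) / 2)"
  have Pc: "P ((l * F\<^sup>2) *\<^sub>R x)"
    unfolding P_def K
  proof
    fix w
    have "gm f x ((l * F\<^sup>2) *\<^sub>R x) w = l * F\<^sup>2 * (w \<bullet> x) * (1 + h * (x \<bullet> x))"
      unfolding gm_eq h_def by (simp add: inner_commute algebra_simps)
    also have "\<dots> = l * (w \<bullet> x)" using hh F0 by (simp add: field_simps)
    finally show "gm f x ((l * F\<^sup>2) *\<^sub>R x) w = l * (w \<bullet> x)" .
  qed
  have uniq: "d = (l * F\<^sup>2) *\<^sub>R x" if "P d" for d
  proof -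
    define c where "c = (l * F\<^sup>2) *\<^sub>R x"
    have eq: "gm f x d w = gm f x c w" for w using that Pc unfolding P_def c_def by (metis (no_types))
    have ne: "1 + h * (x \<bullet> x) \<noteq> 0" using hh F0 by simp
    have "(d \<bullet> x) * (1 + h * (x \<bullet> x)) = (c \<bullet> x) * (1 + h * (x \<bullet> x))"
      using eq[of x] unfolding gm_eq h_def by (simp add: algebra_simps)
    hence dx: "d \<bullet> x = c \<bullet> x" using ne by simp
    have "d \<bullet> w = c \<bullet> w" for w using eq[of w] dx unfolding gm_eq by simp
    hence "(d - c) \<bullet> (d - c) = 0" by (simp add: inner_diff_left)
    thus ?thesis unfolding c_def[symmetric] by simp
  qed
  have "chr f x a b = (l * F\<^sup>2) *\<^sub>R x"
    unfolding chr_def P_def[symmetric] using Pc uniq by (rule the_equality)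
  thus ?thesis unfolding l_def h_def F_def .
qed

lemma lin_surj:
  fixes L :: "real^3 \<Rightarrow> real^3"
  assumes L: "linear L" and p: "p \<noteq> 0" and n: "n \<noteq> 0"
    and inj: "\<forall>u. u \<bullet> p = 0 \<longrightarrow> u \<noteq> 0 \<longrightarrow> L u \<noteq> 0"
    and orth: "\<forall>u. u \<bullet> p = 0 \<longrightarrow> L u \<bullet> n = 0"
    and y: "y \<bullet> n = 0"
  shows "\<exists>u. u \<bullet> p = 0 \<and> L u = y"
proof -
  define T where "T = {u. p \<bullet> u = 0}"
  define Hn where "Hn = {v. n \<bullet> v = 0}"
  have sT: "subspace T" unfolding T_def by (rule subspace_hyperplane)
  have sH: "subspace Hn" unfolding Hn_def by (rule subspace_hyperplane)
  have dT: "dim T = 2" unfolding T_def using dim_hyperplane[OF p] by simp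
  have dH: "dim Hn = 2" unfolding Hn_def using dim_hyperplane[OF n] by simp
  have injT: "inj_on L T"
    unfolding inj_on_def T_def
  proof (intro ballI impI)
    fix u v assume "u \<in> {u. p \<bullet> u = 0}" "v \<in> {u. p \<bullet> u = 0}" "L u = L v"
    hence "(u - v) \<bullet> p = 0" "L (u - v) = 0"
      by (auto simp: inner_diff_left inner_diff_right inner_commute linear_diff[OF L])
    thus "u = v" using inj by auto
  qed
  have "inj_on L (span T)" using injT span_eq_iff sT by metis
  hence dLT: "dim (L ` T) = dim T" using dim_image_eq L by blast
  have sLT: "subspace (L ` T)" using linear_subspace_image[OF L sT] .
  have sub: "L ` T \<subseteq> Hn" unfolding T_def Hn_def using orth by (auto simp: inner_commute)
  have "L ` T = Hn" using subspace_dim_equal[OF sLT sH sub] dLT dT dH by simp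
  moreover have "y \<in> Hn" unfolding Hn_def using y by (simp add: inner_commute)
  ultimately obtain u where "u \<in> T" "L u = y" by blast
  thus ?thesis unfolding T_def by (auto simp: inner_commute)
qed

theorem proposition9:
  fixes M :: "(real^3) set" and f :: "real \<Rightarrow> real"
    and R N :: "real^3 \<Rightarrow> real^3" and U V :: "(real^3) set" and W :: "real set"
  assumes M_open: "open M"
    and f_smooth: "smooth1 W f" "norm ` (M - {0}) \<subseteq> W"
    and f_pos: "\<forall>x\<in>M. f (norm x) > 0"
    and metric_smooth: "\<forall>i j. smooth_fun M (\<lambda>x. gm f x (axis i 1) (axis j 1))"
    and R_smooth: "smooth_map U R" "sphere 0 1 \<subseteq> U"
    and R_inj: "inj_on R (sphere 0 1)"
    and R_imm: "\<forall>p\<in>sphere 0 1. \<forall>u. u \<bullet> p = 0 \<longrightarrow> u \<noteq> 0 \<longrightarrow> frechet_derivative R (at p) u \<noteq> 0"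
    and R_in: "R ` sphere 0 1 \<subseteq> M"
    and N_smooth: "smooth_map V N" "sphere 0 1 \<subseteq> V"
    and N_unit: "\<forall>p\<in>sphere 0 1. gm f (R p) (N p) (N p) = 1"
    and N_normal: "\<forall>p\<in>sphere 0 1. \<forall>u. u \<bullet> p = 0 \<longrightarrow>
                     gm f (R p) (N p) (frechet_derivative R (at p) u) = 0"
    and convex: "\<forall>p\<in>sphere 0 1. \<forall>u. u \<bullet> p = 0 \<longrightarrow> u \<noteq> 0 \<longrightarrow> sff f R N p u u > 0"
  shows "\<forall>p \<in> {p \<in> sphere 0 1. R p \<noteq> 0 \<and> gm f (R p) (ckf f (R p)) (N p) = 0}.
           \<exists>D. ((\<lambda>x. gm f (R x) (ckf f (R x)) (N x)) has_derivative D) (at p)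
               \<and> (\<exists>u. u \<bullet> p = 0 \<and> D u \<noteq> 0)"
proof (intro ballI)
  fix p assume "p \<in> {p \<in> sphere 0 1. R p \<noteq> 0 \<and> gm f (R p) (ckf f (R p)) (N p) = 0}"
  hence ps: "p \<in> sphere 0 1" and Rp0: "R p \<noteq> 0" and phi0: "gm f (R p) (ckf f (R p)) (N p) = 0"
    by auto
  define x where "x = R p"
  have p0: "p \<noteq> 0" using ps by auto
  have xM: "x \<in> M" using R_in ps x_def by auto
  have x0: "x \<noteq> 0" using Rp0 x_def by simp
  define F where "F = f (norm x)"
  have Fpos: "F > 0" using f_pos xM F_def by auto
  have nW: "norm x \<in> W" using f_smooth(2) xM x0 by auto
  have fdiff: "f differentiable (at (norm x))"
    using f_smooth(1) nW unfolding smooth1_def by (metis funpow_0)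
  have Rd: "R differentiable (at p)" using smooth_map_diff[OF R_smooth(1)] R_smooth(2) ps by auto
  have Nd: "N differentiable (at p)" using smooth_map_diff[OF N_smooth(1)] N_smooth(2) ps by auto
  define L where "L = frechet_derivative R (at p)"
  define N' where "N' = frechet_derivative N (at p)"
  have RL: "(R has_derivative L) (at p)" using Rd frechet_derivative_works L_def by blast
  have NN: "(N has_derivative N') (at p)" using Nd frechet_derivative_works N'_def by blast
  have linL: "linear L" using Rd linear_frechet_derivative L_def by blast
  have sqx: "sqrt (x \<bullet> x) = norm x" by (simp add: norm_eq_sqrt_inner)
  have Hd: "Hf f differentiable (at (x \<bullet> x))"
    using Hf_diff[of f "x \<bullet> x"] fdiff x0 Fpos F_def sqx by simp
  then obtain c1 where c1: "(Hf f has_real_derivative c1) (at (x \<bullet> x))"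
    using real_differentiable_def by blast
  define E where "E = (\<lambda>q. f (norm (R q)) * (1 + Hf f (R q \<bullet> R q) * (R q \<bullet> R q)))"
  have phi_eq: "(\<lambda>q. gm f (R q) (ckf f (R q)) (N q)) = (\<lambda>q. (R q \<bullet> N q) * E q)"
    unfolding E_def gm_eq ckf_def by (auto simp: inner_commute algebra_simps)
  have E1: "(\<lambda>q. f (norm (R q))) differentiable (at p)"
  proof -
    have "(\<lambda>q. norm (R q)) differentiable (at p)"
      using differentiable_chain_at[OF Rd, of norm] x0 x_def by (simp add: o_def)
    thus ?thesis using differentiable_chain_at[of "\<lambda>q. norm (R q)" p f] fdiff x_def
      by (simp add: o_def)
  qed
  have E2: "(\<lambda>q. R q \<bullet> R q) differentiable (at p)"
    using Rd by (simp add: differentiable_inner)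
  have E3: "(\<lambda>q. Hf f (R q \<bullet> R q)) differentiable (at p)"
    using differentiable_chain_at[OF E2, of "Hf f"] Hd x_def by (simp add: o_def)
  have "E differentiable (at p)"
    unfolding E_def using E1 E2 E3
    by (intro differentiable_mult differentiable_add differentiable_const) auto
  then obtain E' where EE: "(E has_derivative E') (at p)" unfolding differentiable_def by blast
  have Ep: "E p = 1 / F"
    unfolding E_def F_def x_def[symmetric] using one_plus_Hf[of x f] x0 Fpos F_def
    by (simp add: power2_eq_square)
  have Dd: "((\<lambda>q. gm f (R q) (ckf f (R q)) (N q)) has_derivative
      (\<lambda>u. (R p \<bullet> N' u + L u \<bullet> N p) * E p + (R p \<bullet> N p) * E' u)) (at p)"
    unfolding phi_eq
    by (rule has_derivative_eq_rhs, (rule has_derivative_mult has_derivative_inner RL NN EE)+)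
       (auto simp: algebra_simps)
  have nu: "x \<bullet> N p = 0"
    using phi0 fun_cong[OF phi_eq, of p] Ep Fpos x_def by simp
  have "gm f x (N p) (N p) = 1" using N_unit ps x_def by simp
  hence Nn: "N p \<noteq> 0"
    using nu unfolding gm_eq by (auto simp: inner_commute)
  have orth: "\<forall>u. u \<bullet> p = 0 \<longrightarrow> L u \<bullet> N p = 0"
  proof (intro allI impI)
    fix u assume "u \<bullet> p = 0"
    hence "gm f x (N p) (L u) = 0" using N_normal ps x_def L_def by simp
    thus "L u \<bullet> N p = 0" using nu unfolding gm_eq by (simp add: inner_commute)
  qed
  have inj: "\<forall>u. u \<bullet> p = 0 \<longrightarrow> u \<noteq> 0 \<longrightarrow> L u \<noteq> 0" using R_imm ps L_def by auto
  obtain w where w: "w \<bullet> p = 0" "L w = F *\<^sub>R x"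
    using lin_surj[OF linL p0 Nn inj orth, of "F *\<^sub>R x"] nu by auto
  have w0: "w \<noteq> 0" using w x0 Fpos linear_0[OF linL] by auto
  have chr0: "chr f x (L w) (N p) = 0"
    using chr_eq[of x f c1 "L w" "N p", OF x0 _ c1] Fpos F_def w(2) nu
    by (simp add: inner_commute)
  have sffw: "sff f R N p w w = - ((x \<bullet> N' w) * E p)"
    unfolding sff_def x_def[symmetric] N'_def[symmetric] L_def[symmetric] chr0
    unfolding w(2) gm_eq E_def x_def[symmetric] F_def
    by (simp add: inner_commute algebra_simps)
  have Dw: "(R p \<bullet> N' w + L w \<bullet> N p) * E p + (R p \<bullet> N p) * E' w = (x \<bullet> N' w) * E p"
    using nu w(2) x_def by (simp add: inner_commute)
  have "sff f R N p w w > 0" using convex ps w(1) w0 by auto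
  hence "(R p \<bullet> N' w + L w \<bullet> N p) * E p + (R p \<bullet> N p) * E' w \<noteq> 0"
    using Dw sffw by (metis neg_0_less_iff_less less_irrefl)
  thus "\<exists>D. ((\<lambda>x. gm f (R x) (ckf f (R x)) (N x)) has_derivative D) (at p)
               \<and> (\<exists>u. u \<bullet> p = 0 \<and> D u \<noteq> 0)"
    using Dd w(1) by blast
qed

end
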